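(* Let $R$ be a DT ring and $a\in R$ with $a^2\in\Delta(R)$. Then $a\in\Delta(R)$. In particular, every nilpotent element of $R$ lies in $\Delta(R)$.
   Context: All rings are associative with identity; $U(R)$ is the group of units. $\Delta(R)=\{x\in R: x+u\in U(R)\text{ for all }u\in U(R)\}$. $\mathrm{Tr}(R)=\{x\in R: x^3=x\}$. A ring $R$ is a DT ring if every $r\in R$ can be written $r=e+d$ with $e\in\mathrm{Tr}(R)$ and $d\in\Delta(R)$. *)

theory Defs
  imports Main
begin

definition units :: "'a::ring_1 set" where
  "units = {u. \<exists>v. u * v = 1 \<and> v * u = 1}"

definition Delta :: "'a::ring_1 set" where
  "Delta = {x. \<forall>u\<in>units. x + u \<in> units}"

definition Tr :: "'a::ring_1 set" where
  "Tr = {x. x ^ 3 = x}"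

definition DT_ring :: "'a::ring_1 itself \<Rightarrow> bool" where
  "DT_ring _ \<longleftrightarrow> (\<forall>r::'a. \<exists>e d. r = e + d \<and> e \<in> Tr \<and> d \<in> Delta)"

end

theory Submission
  imports Defs
begin

lemma units_neg: "(u::'a::ring_1) \<in> units \<Longrightarrow> - u \<in> units"
proof -
  assume "u \<in> units"
  then obtain v where "u * v = 1" "v * u = 1" unfolding units_def by blast
  then have "(-u) * (-v) = 1" "(-v) * (-u) = 1" by simp_all
  then show ?thesis unfolding units_def by blast
qed

lemma units_mult: "(u::'a::ring_1) \<in> units \<Longrightarrow> w \<in> units \<Longrightarrow> u * w \<in> units"
proof -
  assume "u \<in> units" "w \<in> units"
  then obtain u' w' where "u * u' = 1" "u' * u = 1" "w * w' = 1" "w' * w = 1"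
    unfolding units_def by blast
  then have "(u*w) * (w'*u') = 1" "(w'*u') * (u*w) = 1"
    by (simp_all add: mult.assoc flip: mult.assoc[of w w' u'] mult.assoc[of u' u w])
  then show ?thesis unfolding units_def by blast
qed

lemma units_comm_factor:
  assumes "(x::'a::ring_1) * y = y * x" "x * y \<in> units"
  shows "x \<in> units"
proof -
  from assms(2) obtain v where v: "x * y * v = 1" "v * (x * y) = 1" unfolding units_def by blast
  have "x * (y * v) = 1" using v by (simp add: mult.assoc)
  moreover have "(v * y) * x = 1" using v assms(1) by (simp add: mult.assoc)
  ultimately have "(v*y) = y * v"
  proof -
    assume h1: "x * (y * v) = 1" and h2: "(v * y) * x = 1"
    have "v*y = (v*y) * (x * (y*v))" using h1 by simp
    also have "\<dots> = ((v*y)*x) * (y*v)" by (simp add: mult.assoc)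
    also have "\<dots> = y*v" using h2 by simp
    finally show ?thesis .
  qed
  then have "x * (y * v) = 1 \<and> (y * v) * x = 1" using \<open>x * (y * v) = 1\<close> \<open>(v * y) * x = 1\<close> by simp
  then show ?thesis unfolding units_def by blast
qed

lemma Delta_neg: "(x::'a::ring_1) \<in> Delta \<Longrightarrow> - x \<in> Delta"
proof -
  assume h: "x \<in> Delta"
  have "- x + u \<in> units" if "u \<in> units" for u :: 'a
  proof -
    have "x + - u \<in> units" using h units_neg[OF that] unfolding Delta_def by blast
    then have "- (x + - u) \<in> units" by (rule units_neg)
    moreover have "- (x + - u) = - x + u" by simp
    ultimately show ?thesis by simp
  qed
  then show ?thesis unfolding Delta_def by blast
qed

lemma Delta_add_unit: "(x::'a::ring_1) \<in> Delta \<Longrightarrow> u \<in> units \<Longrightarrow> u + x \<in> units"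
  unfolding Delta_def by (simp add: add.commute)

lemma one_units: "(1::'a::ring_1) \<in> units" unfolding units_def by auto

lemma Delta_one_minus: "(x::'a::ring_1) \<in> Delta \<Longrightarrow> 1 - x \<in> units"
  using Delta_add_unit[OF Delta_neg one_units] by simp

lemma Delta_zero: "(0::'a::ring_1) \<in> Delta" unfolding Delta_def by simp

lemma part1:
  assumes "DT_ring TYPE('a::ring_1)" "(a::'a) ^ 2 \<in> Delta"
  shows "a \<in> Delta"
proof -
  obtain e d where ed: "a = e + d" "e \<in> Tr" "d \<in> Delta"
    using assms(1) unfolding DT_ring_def by blast
  have e3: "e ^ 3 = e" using ed(2) unfolding Tr_def by simp
  have u: "1 - a^2 \<in> units" using Delta_one_minus[OF assms(2)] .
  have f1: "1 - a^2 = (1 - a) * (1 + a)" by (simp add: algebra_simps power2_eq_square)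
  have f2: "1 - a^2 = (1 + a) * (1 - a)" by (simp add: algebra_simps power2_eq_square)
  have ua: "1 - a \<in> units" using units_comm_factor[of "1 - a" "1 + a"] u f1 f2 by simp
  have ub: "1 + a \<in> units" using units_comm_factor[of "1 + a" "1 - a"] u f1 f2 by simp
  have "(1 - a) + d \<in> units" using Delta_add_unit[OF ed(3) ua] .
  then have ue1: "1 - e \<in> units" using ed(1) by (simp add: algebra_simps)
  have "(1 + a) + - d \<in> units" using Delta_add_unit[OF Delta_neg[OF ed(3)] ub] .
  then have ue2: "1 + e \<in> units" using ed(1) by (simp add: algebra_simps)
  have "(1 - e) * (1 + e) \<in> units" using units_mult[OF ue1 ue2] .
  then obtain v where v: "v * ((1 - e) * (1 + e)) = 1" unfolding units_def by blast
  have z: "((1 - e) * (1 + e)) * (e * e) = 0"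
    using e3 by (simp add: algebra_simps power3_eq_cube)
  have "e * e = (v * ((1 - e) * (1 + e))) * (e * e)" using v by simp
  also have "\<dots> = v * (((1 - e) * (1 + e)) * (e * e))" by (simp only: mult.assoc)
  finally have "e * e = v * (((1 - e) * (1 + e)) * (e * e))" .
  then have ee: "e * e = 0" using z by simp
  have "e = e * (e * e)" using e3 by (simp add: power3_eq_cube mult.assoc)
  then have "e = 0" using ee by simp
  then show ?thesis using ed by simp
qed

theorem lemma2p4:
  assumes "DT_ring TYPE('a::ring_1)"
  shows "(\<forall>a::'a. a ^ 2 \<in> Delta \<longrightarrow> a \<in> Delta) \<and>
         (\<forall>a::'a. (\<exists>n. a ^ n = 0) \<longrightarrow> a \<in> Delta)"
proof
  show P1: "\<forall>a::'a. a ^ 2 \<in> Delta \<longrightarrow> a \<in> Delta" using part1[OF assms] by blast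
  have "\<forall>a::'a. a ^ n = 0 \<longrightarrow> a \<in> Delta" for n
  proof (induction n rule: less_induct)
    case (less n)
    show ?case
    proof (intro allI impI)
      fix a :: 'a assume an: "a ^ n = 0"
      show "a \<in> Delta"
      proof (cases "n \<le> 1")
        case True
        then have "n = 0 \<or> n = 1" by auto
        then have "a = 0"
        proof
          assume "n = 0" then have "(1::'a) = 0" using an by simp
          then show "a = 0" by (metis mult_1_right mult_zero_right)
        next
          assume "n = 1" then show "a = 0" using an by simp
        qed
        then show ?thesis using Delta_zero by simp
      next
        case False
        define m where "m = (n + 1) div 2"
        have mn: "m < n" "n \<le> 2 * m" using False unfolding m_def by auto
        have "(a^2) ^ m = a ^ (2*m)" by (simp add: power_mult)
        also have "\<dots> = a ^ (n + (2*m - n))" using mn(2) by simp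
        also have "\<dots> = a ^ n * a ^ (2*m - n)" by (rule power_add)
        finally have "(a^2) ^ m = a ^ n * a ^ (2*m - n)" .
        then have "(a^2)^m = 0" using an by simp
        then have "a^2 \<in> Delta" using less mn(1) by blast
        then show ?thesis using P1 by blast
      qed
    qed
  qed
  then show "\<forall>a::'a. (\<exists>n. a ^ n = 0) \<longrightarrow> a \<in> Delta" by blast
qed

end
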